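(* Let $T:X\rightrightarrows X^*$ be a monotone operator on a real Banach space $X$, let $i\in\{0,1\}$, let $C\in\mathcal C_i(T)$ and $K\in\mathcal C_0(T+\partial I_C)$; if $i=0$ assume also that $\overline{D_T}$ is convex. Then $C\cap K\in\mathcal C_i(T)$.
   Context: $I_C$ is the indicator function of $C$ and $\partial I_C$ its normal cone operator; $(T+\partial I_C)(x)=T(x)+\partial I_C(x)$, so $D_{T+\partial I_C}=D_T\cap C$. For an operator $S$, $\mathcal C_0(S)=\{C\subset X: C$ closed, convex, $D_S\cap\mathrm{int}\,C\ne\emptyset\}$ and $\mathcal C_1(S)=\{C\subset X: C$ closed, convex, and $\bigcup_{\lambda>0}\lambda(\mathrm{co}\,D_S-C)$ is a closed subspace of $X\}$. *)

theory Defs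
  imports "HOL-Analysis.Analysis"
begin

definition dom_op :: "('a \<Rightarrow> 'b set) \<Rightarrow> 'a set" where
  "dom_op T = {x. T x \<noteq> {}}"

definition monotone_op :: "('a::real_normed_vector \<Rightarrow> ('a \<Rightarrow>\<^sub>L real) set) \<Rightarrow> bool" where
  "monotone_op T \<longleftrightarrow>
     (\<forall>x y u v. u \<in> T x \<longrightarrow> v \<in> T y \<longrightarrow> blinfun_apply (u - v) (x - y) \<ge> 0)"

text \<open>Normal cone operator of C (subdifferential of the indicator function).\<close>
definition normal_cone :: "'a::real_normed_vector set \<Rightarrow> 'a \<Rightarrow> ('a \<Rightarrow>\<^sub>L real) set" where
  "normal_cone C x = (if x \<in> C then {u. \<forall>y\<in>C. blinfun_apply u (y - x) \<le> 0} else {})"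

definition op_sum :: "('a \<Rightarrow> 'b::plus set) \<Rightarrow> ('a \<Rightarrow> 'b set) \<Rightarrow> 'a \<Rightarrow> 'b set" where
  "op_sum S T x = {u + v | u v. u \<in> S x \<and> v \<in> T x}"

definition C0 :: "('a::real_normed_vector \<Rightarrow> 'b set) \<Rightarrow> 'a set set" where
  "C0 S = {C. closed C \<and> convex C \<and> dom_op S \<inter> interior C \<noteq> {}}"

definition C1 :: "('a::real_normed_vector \<Rightarrow> 'b set) \<Rightarrow> 'a set set" where
  "C1 S = {C. closed C \<and> convex C \<and>
      (let M = (\<Union>r\<in>{0::real<..}. (\<lambda>z. r *\<^sub>R z) ` {a - c | a c. a \<in> convex hull (dom_op S) \<and> c \<in> C})
       in closed M \<and> subspace M)}"

definition Cclass :: "nat \<Rightarrow> ('a::real_normed_vector \<Rightarrow> 'b set) \<Rightarrow> 'a set set" where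
  "Cclass i S = (if i = 0 then C0 S else C1 S)"

end

theory Submission
  imports Defs
begin

lemma dom_sum_nc: "dom_op (op_sum T (normal_cone C)) = dom_op T \<inter> C"
proof -
  have "normal_cone C x \<noteq> {} \<longleftrightarrow> x \<in> C" for x
  proof
    assume "x \<in> C" then have "0 \<in> normal_cone C x" by (simp add: normal_cone_def)
    thus "normal_cone C x \<noteq> {}" by blast
  qed (auto simp: normal_cone_def split: if_splits)
  thus ?thesis by (auto simp: dom_op_def op_sum_def)
qed

lemma small_step:
  fixes x c :: "'a::real_normed_vector"
  assumes "d > 0"
  obtains s where "0 < s" "s \<le> 1" "norm (s *\<^sub>R (c - x)) < d"
proof -
  define s where "s = min 1 (d / (2 * (norm (c - x) + 1)))"
  have n: "norm (c - x) + 1 > 0" by (smt (verit) norm_ge_zero)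
  have "0 < s" "s \<le> 1" using assms n by (auto simp: s_def)
  moreover have "norm (s *\<^sub>R (c - x)) < d"
  proof -
    have "norm (s *\<^sub>R (c - x)) = s * norm (c - x)" using \<open>0 < s\<close> by simp
    also have "\<dots> \<le> (d / (2 * (norm (c - x) + 1))) * norm (c - x)"
      by (intro mult_right_mono) (auto simp: s_def)
    also have "\<dots> < d"
    proof -
      have "norm (c - x) / (2 * (norm (c - x) + 1)) < 1" using n by (simp add: field_simps)
      hence "d * (norm (c - x) / (2 * (norm (c - x) + 1))) < d * 1" using assms by (intro mult_strict_left_mono) auto
      thus ?thesis by simp
    qed
    finally show ?thesis .
  qed
  ultimately show ?thesis using that by blast
qed

lemma shrink_interior:
  fixes S :: "'a::real_normed_vector set"
  assumes S: "convex S" and c: "c \<in> interior S" and x: "x \<in> S" and e: "0 < e" "e \<le> 1"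
  shows "x - e *\<^sub>R (x - c) \<in> interior S"
proof -
  obtain r where r: "r > 0" "ball c r \<subseteq> S"
    using c open_interior open_contains_ball interior_subset by (metis subset_trans)
  let ?y = "x - e *\<^sub>R (x - c)"
  have "ball ?y (e * r) \<subseteq> S"
  proof
    fix w assume w: "w \<in> ball ?y (e * r)"
    define v where "v = c + (1 / e) *\<^sub>R (w - ?y)"
    have "dist c v = norm (w - ?y) / e" using e by (simp add: v_def dist_norm)
    also have "\<dots> < r" using w e by (simp add: dist_norm norm_minus_commute field_simps)
    finally have "v \<in> S" using r by auto
    have "w = (1 - e) *\<^sub>R x + e *\<^sub>R v" using e by (simp add: v_def algebra_simps)
    thus "w \<in> S" using convexD[OF S x \<open>v \<in> S\<close>, of "1 - e" e] e by simp
  qed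
  thus ?thesis using e r by (meson centre_in_ball interior_maximal mult_pos_pos open_ball subsetD)
qed

theorem lemma2p10:
  fixes T :: "'a::banach \<Rightarrow> ('a \<Rightarrow>\<^sub>L real) set"
    and i :: nat and C K :: "'a set"
  assumes "monotone_op T"
    and "i \<in> {0, 1}"
    and "C \<in> Cclass i T"
    and "K \<in> C0 (op_sum T (normal_cone C))"
    and "i = 0 \<Longrightarrow> convex (closure (dom_op T))"
  shows "C \<inter> K \<in> Cclass i T"
proof -
  let ?D = "dom_op T"
  from assms(4) have Kc: "closed K" "convex K" and "?D \<inter> C \<inter> interior K \<noteq> {}"
    by (auto simp: C0_def dom_sum_nc)
  then obtain x1 where x1: "x1 \<in> ?D" "x1 \<in> C" "x1 \<in> interior K" by blast
  obtain d where d: "d > 0" "ball x1 d \<subseteq> interior K"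
    using x1(3) open_interior open_contains_ball by blast
  show ?thesis
  proof (cases "i = 0")
    case True
    with assms(3) have Cc: "closed C" "convex C" "?D \<inter> interior C \<noteq> {}"
      by (auto simp: Cclass_def C0_def)
    then obtain x0 where x0: "x0 \<in> ?D" "x0 \<in> interior C" by blast
    obtain s where s: "0 < s" "s \<le> 1" "norm (s *\<^sub>R (x0 - x1)) < d"
      using small_step[OF d(1)] by blast
    define y where "y = x1 - s *\<^sub>R (x1 - x0)"
    have "y \<in> interior C"
      unfolding y_def using shrink_interior[OF Cc(2) x0(2), of x1 s] x1 s by auto
    moreover have "y \<in> interior K"
    proof -
      have "dist x1 y = norm (s *\<^sub>R (x1 - x0))" by (simp add: y_def dist_norm)
      also have "\<dots> = norm (s *\<^sub>R (x0 - x1))" by (metis norm_minus_commute scaleR_right_diff_distrib)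
      finally have "y \<in> ball x1 d" using s by simp
      thus ?thesis using d by blast
    qed
    moreover have "y \<in> closure ?D"
    proof -
      have "y = (1 - s) *\<^sub>R x1 + s *\<^sub>R x0" by (simp add: y_def algebra_simps)
      moreover have "x1 \<in> closure ?D" "x0 \<in> closure ?D" using x0 x1 closure_subset by auto
      ultimately show ?thesis using convexD[OF assms(5)[OF True], of x1 x0 "1 - s" s] s by simp
    qed
    ultimately have "(interior C \<inter> interior K) \<inter> closure ?D \<noteq> {}" by blast
    hence "(interior C \<inter> interior K) \<inter> ?D \<noteq> {}"
      using open_Int_closure_eq_empty[of "interior C \<inter> interior K" ?D] by blast
    thus ?thesis using True Cc Kc
      by (auto simp: Cclass_def C0_def interior_Int closed_Int convex_Int)
  next
    case False
    with assms(3) have Cc: "closed C" "convex C" and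
      M: "closed (\<Union>r\<in>{0::real<..}. (\<lambda>z. r *\<^sub>R z) ` {a - c | a c. a \<in> convex hull ?D \<and> c \<in> C})"
         "subspace (\<Union>r\<in>{0::real<..}. (\<lambda>z. r *\<^sub>R z) ` {a - c | a c. a \<in> convex hull ?D \<and> c \<in> C})"
      by (auto simp: Cclass_def C1_def Let_def)
    have eq: "(\<Union>r\<in>{0::real<..}. (\<lambda>z. r *\<^sub>R z) ` {a - c | a c. a \<in> convex hull ?D \<and> c \<in> C \<inter> K})
      = (\<Union>r\<in>{0::real<..}. (\<lambda>z. r *\<^sub>R z) ` {a - c | a c. a \<in> convex hull ?D \<and> c \<in> C})"
      (is "?L = ?R")
    proof
      show "?L \<subseteq> ?R" by blast
      show "?R \<subseteq> ?L"
      proof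
        fix z assume "z \<in> ?R"
        then obtain r a c where r: "r > 0" "a \<in> convex hull ?D" "c \<in> C" "z = r *\<^sub>R (a - c)"
          by blast
        obtain s where s: "0 < s" "s \<le> 1" "norm (s *\<^sub>R (c - x1)) < d"
          using small_step[OF d(1)] by blast
        define c' where "c' = (1 - s) *\<^sub>R x1 + s *\<^sub>R c"
        define a' where "a' = (1 - s) *\<^sub>R x1 + s *\<^sub>R a"
        have "c' \<in> C" unfolding c'_def using Cc(2) x1(2) r(3) s
          by (intro convexD) auto
        moreover have "c' \<in> K"
        proof -
          have "dist x1 c' = norm (s *\<^sub>R (c - x1))"
            by (simp add: c'_def dist_norm algebra_simps norm_minus_commute)
          hence "c' \<in> ball x1 d" using s by simp
          thus ?thesis using d interior_subset by blast
        qed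
        moreover have "a' \<in> convex hull ?D" unfolding a'_def using r(2) x1(1) s
          by (intro convexD) (auto simp: hull_inc)
        moreover have "z = (r / s) *\<^sub>R (a' - c')"
        proof -
          have "a' - c' = s *\<^sub>R (a - c)" by (simp add: a'_def c'_def algebra_simps)
          thus ?thesis using r s by simp
        qed
        moreover have "r / s > 0" using r s by simp
        ultimately show "z \<in> ?L" by blast
      qed
    qed
    have L1: "closed (\<Union>r\<in>{0::real<..}. (\<lambda>z. r *\<^sub>R z) ` {a - c | a c. a \<in> convex hull ?D \<and> c \<in> C \<inter> K})"
      using M(1) by (subst eq) assumption
    have L2: "subspace (\<Union>r\<in>{0::real<..}. (\<lambda>z. r *\<^sub>R z) ` {a - c | a c. a \<in> convex hull ?D \<and> c \<in> C \<inter> K})"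
      using M(2) by (subst eq) assumption
    show ?thesis using False Cc Kc L1 L2
      unfolding Cclass_def C1_def Let_def by (simp add: closed_Int convex_Int)
  qed
qed

end
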